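(* Let $f:\mathbb{R}^n\to\mathbb{R}$ be twice continuously differentiable with $L$-Lipschitz gradient, let $\alpha\in(0,\frac1L)$, and let $x^*$ be a strict saddle point of $f$. Then the Jacobian $Dg_{\alpha f}(x^* )$ of $g_{\alpha f}=g_{\alpha f}^p\circ\cdots\circ g_{\alpha f}^1$ at $x^*$ has at least one eigenvalue whose modulus is strictly greater than one.
   Context: $\|\nabla f(x)-\nabla f(y)\|\le L\|x-y\|$ for all $x,y$, $L>0$. The variable is partitioned as $x=(x(1),\dots,x(p))$, $x(s)\in\mathbb{R}^{n_s}$, $\sum_s n_s=n$; $U_s\in\mathbb{R}^{n\times n_s}$ is the $s$-th block-column of $I_n$ and $\nabla_sf(x)=U_s^T\nabla f(x)$. For $\alpha>0$, $g_{\alpha f}^s(x)=x-\alpha U_s\nabla_s f(x)$. A strict saddle point is a point $x^*$ with $\nabla f(x^* )=0$ and $\lambda_{\min}(\nabla^2 f(x^* ))<0$. *)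

theory Defs
  imports "HOL-Analysis.Analysis"
begin

definition twice_cont_diff :: "(real^'n \<Rightarrow> real) \<Rightarrow> (real^'n \<Rightarrow> real^'n) \<Rightarrow> bool" where
  "twice_cont_diff f gf \<longleftrightarrow>
     (\<forall>x. GDERIV f x :> gf x) \<and> (\<forall>x. gf differentiable (at x)) \<and>
     continuous_on UNIV (\<lambda>x. jacobian gf (at x))"

definition lipschitz_grad :: "real \<Rightarrow> (real^'n \<Rightarrow> real^'n) \<Rightarrow> bool" where
  "lipschitz_grad L gf \<longleftrightarrow> (\<forall>x y. norm (gf x - gf y) \<le> L * norm (x - y))"

definition real_eigenvalue :: "real^'n^'n \<Rightarrow> real \<Rightarrow> bool" where
  "real_eigenvalue A \<mu> \<longleftrightarrow> (\<exists>v. v \<noteq> 0 \<and> A *v v = \<mu> *s v)"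

definition lambda_min :: "real^'n^'n \<Rightarrow> real" where
  "lambda_min A = Min {\<mu>. real_eigenvalue A \<mu>}"

definition complex_eigenvalue :: "real^'n^'n \<Rightarrow> complex \<Rightarrow> bool" where
  "complex_eigenvalue A \<mu> \<longleftrightarrow>
     (\<exists>v::complex^'n. v \<noteq> 0 \<and> map_matrix complex_of_real A *v v = \<mu> *s v)"

definition strict_saddle :: "(real^'n \<Rightarrow> real^'n) \<Rightarrow> real^'n \<Rightarrow> bool" where
  "strict_saddle gf x \<longleftrightarrow> gf x = 0 \<and> lambda_min (jacobian gf (at x)) < 0"

text \<open>Block of coordinates B: U_B grad_B f(x) is the gradient with coordinates outside B zeroed.\<close>
definition block_step :: "real \<Rightarrow> (real^'n \<Rightarrow> real^'n) \<Rightarrow> 'n set \<Rightarrow> real^'n \<Rightarrow> real^'n" where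
  "block_step \<alpha> gf B x = x - \<alpha> *\<^sub>R (\<chi> i. if i \<in> B then gf x $ i else 0)"

text \<open>g = g^p o ... o g^1 for the block list [B_1, ..., B_p] (g^1 applied first).\<close>
definition block_map :: "real \<Rightarrow> (real^'n \<Rightarrow> real^'n) \<Rightarrow> 'n set list \<Rightarrow> real^'n \<Rightarrow> real^'n" where
  "block_map \<alpha> gf Bs x = fold (\<lambda>B y. block_step \<alpha> gf B y) Bs x"

definition block_partition :: "'n set list \<Rightarrow> bool" where
  "block_partition Bs \<longleftrightarrow> (\<Union>(set Bs) = UNIV) \<and> (\<forall>B\<in>set Bs. B \<noteq> {}) \<and>
     (\<forall>i<length Bs. \<forall>j<length Bs. i \<noteq> j \<longrightarrow> Bs ! i \<inter> Bs ! j = {})"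

end

theory Submission
  imports Defs "Jordan_Normal_Form.Spectral_Radius"
begin


definition projB :: "'n set \<Rightarrow> real^'n \<Rightarrow> real^'n" where
  "projB B v = (\<chi> i. if i \<in> B then v$i else 0)"

definition Sst :: "real \<Rightarrow> real^'n^'n \<Rightarrow> 'n set \<Rightarrow> real^'n \<Rightarrow> real^'n" where
  "Sst a H B y = y - a *\<^sub>R projB B (H *v y)"

definition Qf :: "real^'n^'n \<Rightarrow> real^'n \<Rightarrow> real" where
  "Qf H y = y \<bullet> (H *v y)"

lemma projB_inner: "projB B z \<bullet> z = (norm (projB B z))^2"
  unfolding projB_def power2_norm_eq_inner inner_vec_def
  by (intro sum.cong) auto

lemma projB_norm: "norm (projB B z) \<le> norm z"
proof -
  have "(norm (projB B z))^2 \<le> (norm z)^2"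
    unfolding projB_def power2_norm_eq_inner inner_vec_def
    by (intro sum_mono) auto
  thus ?thesis by (simp add: power_mono_iff)
qed

lemma projB_diff: "projB B (x - y) = projB B x - projB B y"
  unfolding projB_def by (vector)

lemma mv_scaleR: "(H::real^'n^'n) *v (c *\<^sub>R x) = c *\<^sub>R (H *v x)"
  by (simp add: matrix_vector_mult_def Finite_Cartesian_Product.vec_eq_iff sum_distrib_left algebra_simps)

lemma step_decrease:
  fixes H :: "real^'n^'n"
  assumes sym: "\<And>u v. (H *v u) \<bullet> v = u \<bullet> (H *v v)"
    and bnd: "\<And>v. norm (H *v v) \<le> L * norm v" and a: "a > 0"
  shows "Qf H (Sst a H B y) \<le> Qf H y - (2/a - L) * (norm (Sst a H B y - y))^2"
proof -
  define p where "p = projB B (H *v y)"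
  define d where "d = a *\<^sub>R p"
  have S: "Sst a H B y = y - d" unfolding Sst_def d_def p_def by simp
  have e1: "Qf H (y - d) = Qf H y - 2 * (d \<bullet> (H *v y)) + d \<bullet> (H *v d)"
    unfolding Qf_def matrix_vector_mult_diff_distrib
    using sym[of y d] by (simp add: inner_diff_left inner_diff_right inner_commute)
  have e2: "d \<bullet> (H *v y) = a * (norm p)^2"
    unfolding d_def p_def using projB_inner[of B "H *v y"] by simp
  have e3: "d \<bullet> (H *v d) \<le> L * (norm d)^2"
  proof -
    have "d \<bullet> (H *v d) \<le> norm d * norm (H *v d)" by (rule norm_cauchy_schwarz)
    also have "\<dots> \<le> norm d * (L * norm d)" by (rule mult_left_mono[OF bnd]) simp
    finally show ?thesis by (simp add: power2_eq_square algebra_simps)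
  qed
  have nd: "(norm d)^2 = a^2 * (norm p)^2" unfolding d_def using a
    by (simp add: power_mult_distrib)
  have "Qf H (y - d) \<le> Qf H y - 2 * a * (norm p)^2 + L * (a^2 * (norm p)^2)"
    using e1 e2 e3 nd by simp
  also have "\<dots> = Qf H y - (2/a - L) * (a^2 * (norm p)^2)"
    using a by (simp add: field_simps power2_eq_square)
  finally show ?thesis using S nd by simp
qed

fun Tl :: "real \<Rightarrow> real^'n^'n \<Rightarrow> 'n set list \<Rightarrow> real^'n \<Rightarrow> real^'n" where
  "Tl a H [] = id"
| "Tl a H (B # Bs) = Tl a H Bs \<circ> Sst a H B"

lemma sq_tri: "(norm ((x::'a::real_normed_vector) + z))^2 \<le> 2 * (norm x)^2 + 2 * (norm z)^2"
proof -
  have "norm (x + z) \<le> norm x + norm z" by (rule norm_triangle_ineq)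
  hence "(norm (x + z))^2 \<le> (norm x + norm z)^2" by (simp add: power_mono)
  also have "\<dots> \<le> 2 * (norm x)^2 + 2 * (norm z)^2"
    by (simp add: power2_eq_square algebra_simps) (metis sum_squares_bound mult.commute add.commute power2_eq_square)
  finally show ?thesis .
qed

lemma Tl_decrease:
  fixes H :: "real^'n^'n"
  assumes sym: "\<And>u v. (H *v u) \<bullet> v = u \<bullet> (H *v v)"
    and bnd: "\<And>v. norm (H *v v) \<le> L * norm v" and a: "a > 0" and L: "L > 0"
    and c: "2/a - L > 0"
  shows "\<exists>A\<ge>0. \<forall>y. Qf H (Tl a H Bs y) \<le> Qf H y \<and>
     (\<forall>B\<in>set Bs. (norm (projB B (H *v y)))^2 \<le> A * (Qf H y - Qf H (Tl a H Bs y)))"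
proof (induction Bs)
  case Nil
  show ?case by (intro exI[of _ 0]) auto
next
  case (Cons B Bs)
  then obtain A' where A': "A' \<ge> 0" and IH: "\<And>y. Qf H (Tl a H Bs y) \<le> Qf H y \<and>
     (\<forall>B\<in>set Bs. (norm (projB B (H *v y)))^2 \<le> A' * (Qf H y - Qf H (Tl a H Bs y)))" by blast
  define cc where "cc = 2/a - L"
  have cc: "cc > 0" using c cc_def by simp
  define A where "A = 1/(cc*a^2) + 2*A' + 2*L^2/cc"
  have A0: "A \<ge> 0" unfolding A_def using cc a A' by (intro add_nonneg_nonneg) auto
  show ?case
  proof (intro exI[of _ A] conjI allI A0)
    fix y
    define y1 where "y1 = Sst a H B y"
    have T: "Tl a H (B # Bs) y = Tl a H Bs y1" by (simp add: y1_def)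
    have D1: "Qf H y1 \<le> Qf H y - cc * (norm (y1 - y))^2"
      unfolding y1_def cc_def by (rule step_decrease[OF sym bnd a])
    have D1': "cc * (norm (y1 - y))^2 \<ge> 0" using cc by simp
    have D': "Qf H (Tl a H Bs y1) \<le> Qf H y1" using IH by blast
    show "Qf H (Tl a H (B # Bs) y) \<le> Qf H y" unfolding T using D1 D1' D' by linarith
    define D where "D = Qf H y - Qf H (Tl a H (B # Bs) y)"
    have nd: "(norm (y1 - y))^2 \<le> D / cc" using D1 D' T cc unfolding D_def
      by (simp add: field_simps)
    have y1y: "y1 - y = - (a *\<^sub>R projB B (H *v y))" unfolding y1_def Sst_def by simp
    show "\<forall>B'\<in>set (B # Bs). (norm (projB B' (H *v y)))^2 \<le> A * D"
    proof
      fix B' assume B': "B' \<in> set (B # Bs)"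
      have D0: "D \<ge> 0" unfolding D_def using \<open>Qf H (Tl a H (B # Bs) y) \<le> Qf H y\<close> by simp
      have ineq: "A * D \<ge> 1/(cc*a^2) * D" "A * D \<ge> 2*A' * D + 2*L^2/cc * D"
        unfolding A_def using D0 A' cc by (auto simp: algebra_simps intro!: mult_nonneg_nonneg)
      show "(norm (projB B' (H *v y)))^2 \<le> A * D"
      proof (cases "B' = B")
        case True
        have "(norm (y1 - y))^2 = a^2 * (norm (projB B (H *v y)))^2"
          using y1y a by (simp add: power_mult_distrib)
        hence "a^2 * (norm (projB B (H *v y)))^2 \<le> D / cc" using nd by simp
        hence "(norm (projB B (H *v y)))^2 \<le> 1/(cc*a^2) * D" using a cc
          by (simp add: field_simps)
        thus ?thesis using True ineq(1) by simp
      next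
        case False
        hence B'in: "B' \<in> set Bs" using B' by simp
        have Dp: "Qf H y1 - Qf H (Tl a H Bs y1) \<le> D" unfolding D_def using T D1 D1' by simp
        have i1: "(norm (projB B' (H *v y1)))^2 \<le> A' * D"
          using IH[of y1] B'in Dp A' by (meson order_trans mult_left_mono)
        have "projB B' (H *v y) = projB B' (H *v y1) + projB B' (H *v (y - y1))"
          by (simp add: projB_diff matrix_vector_mult_diff_distrib)
        hence "(norm (projB B' (H *v y)))^2 \<le> 2 * (norm (projB B' (H *v y1)))^2 + 2 * (norm (projB B' (H *v (y - y1))))^2"
          using sq_tri by metis
        also have "(norm (projB B' (H *v (y - y1))))^2 \<le> L^2 * (norm (y1 - y))^2"
        proof -
          have "norm (projB B' (H *v (y - y1))) \<le> L * norm (y1 - y)"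
            using projB_norm bnd[of "y - y1"] by (metis norm_minus_commute order_trans)
          hence "(norm (projB B' (H *v (y - y1))))^2 \<le> (L * norm (y1 - y))^2"
            by (simp add: power_mono)
          thus ?thesis by (simp add: power_mult_distrib)
        qed
        finally have "(norm (projB B' (H *v y)))^2 \<le> 2 * (A' * D) + 2 * (L^2 * (D / cc))"
          using i1 nd L by (smt (verit) mult_left_mono zero_le_power2)
        thus ?thesis using ineq by (simp add: algebra_simps)
      qed
    qed
  qed
qed

lemma cover_sq:
  assumes cov: "\<Union>(set Bs) = UNIV"
  shows "(norm (z::real^'n))^2 \<le> (\<Sum>B\<in>set Bs. (norm (projB B z))^2)"
proof -
  have n1: "(norm z)^2 = (\<Sum>i\<in>UNIV. (z$i)^2)"
    unfolding power2_norm_eq_inner inner_vec_def by (simp add: power2_eq_square)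
  have n2: "(norm (projB B z))^2 = (\<Sum>i\<in>UNIV. if i \<in> B then (z$i)^2 else 0)" for B
    unfolding power2_norm_eq_inner inner_vec_def projB_def
    by (intro sum.cong) (auto simp: power2_eq_square)
  have "(\<Sum>i\<in>UNIV. (z$i)^2) \<le> (\<Sum>i\<in>UNIV. \<Sum>B\<in>set Bs. if i \<in> B then (z$i)^2 else 0)"
  proof (rule sum_mono)
    fix i :: 'n
    have "i \<in> \<Union>(set Bs)" using cov by simp
    then obtain B0 where B0: "B0 \<in> set Bs" "i \<in> B0" by auto
    have "(if i \<in> B0 then (z$i)^2 else 0) \<le> (\<Sum>B\<in>set Bs. if i \<in> B then (z$i)^2 else 0)"
      using member_le_sum[of B0 "set Bs" "\<lambda>B. if i \<in> B then (z$i)^2 else 0"] B0 by simp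
    thus "(z$i)^2 \<le> (\<Sum>B\<in>set Bs. if i \<in> B then (z$i)^2 else 0)" using B0 by simp
  qed
  also have "\<dots> = (\<Sum>B\<in>set Bs. (norm (projB B z))^2)"
    unfolding n2 by (rule sum.swap)
  finally show ?thesis using n1 by simp
qed

lemma PL_ineq:
  fixes H :: "real^'n^'n"
  assumes sym: "\<And>u v. (H *v u) \<bullet> v = u \<bullet> (H *v v)"
  shows "\<exists>k>0. \<forall>y. - Qf H y \<le> k * (norm (H *v y))^2"
proof -
  define R where "R = range (\<lambda>v. H *v v)"
  note subR0 = linear_subspace_image[OF matrix_vector_mul_linear[of H] subspace_UNIV]
  have Req: "R = (*v) H ` UNIV" unfolding R_def by simp
  note subR = subR0[folded Req]
  have inj: "\<forall>x\<in>R. H *v x = 0 \<longrightarrow> x = 0"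
  proof (intro ballI impI)
    fix x assume "x \<in> R" "H *v x = 0"
    then obtain w where w: "x = H *v w" unfolding R_def by auto
    have "x \<bullet> x = w \<bullet> (H *v x)" using sym[of w x] w by simp
    thus "x = 0" using \<open>H *v x = 0\<close> by simp
  qed
  obtain e where e: "e > 0" "\<And>x. x \<in> R \<Longrightarrow> norm (H *v x) \<ge> e * norm x"
    using injective_imp_isometric[OF closed_subspace[OF subR] subR matrix_vector_mul_bounded_linear inj]
    by blast
  have spanR: "span R = R" using subR by (simp add: span_eq_iff)
  show ?thesis
  proof (intro exI[of _ "1/e"] conjI allI)
    show "1/e > 0" using e by simp
    fix y
    obtain a b where ab: "a \<in> span R" "\<And>w. w \<in> span R \<Longrightarrow> real_inner_class.orthogonal b w" "y = a + b"
      using orthogonal_subspace_decomp_exists by blast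
    have aR: "a \<in> R" using ab spanR by simp
    have Hb: "H *v b = 0"
    proof -
      have "H *v (H *v b) \<in> R" unfolding R_def by auto
      hence "real_inner_class.orthogonal b (H *v (H *v b))" using ab spanR by simp
      hence "b \<bullet> (H *v (H *v b)) = 0" by (simp add: real_inner_class.orthogonal_def)
      hence "(H *v b) \<bullet> (H *v b) = 0" using sym[of b "H *v b"] by simp
      thus ?thesis by simp
    qed
    have Hy: "H *v y = H *v a" using ab Hb by (simp add: matrix_vector_right_distrib)
    have "Qf H y = (a + b) \<bullet> (H *v a)" unfolding Qf_def Hy using ab(3) by simp
    also have "\<dots> = a \<bullet> (H *v a) + b \<bullet> (H *v a)" by (simp add: inner_add_left)
    also have "b \<bullet> (H *v a) = 0" using sym[of b a] Hb by simp
    finally have Q: "Qf H y = a \<bullet> (H *v a)" by simp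
    have "- Qf H y \<le> norm a * norm (H *v a)"
      unfolding Q using norm_cauchy_schwarz[of "-a" "H *v a"] by simp
    also have "\<dots> \<le> (norm (H *v a) / e) * norm (H *v a)"
    proof (rule mult_right_mono)
      show "norm a \<le> norm (H *v a) / e" using e(2)[OF aR] e(1) by (simp add: pos_le_divide_eq mult.commute)
    qed simp
    also have "\<dots> = 1/e * (norm (H *v y))^2" unfolding Hy by (simp add: power2_eq_square)
    finally show "- Qf H y \<le> 1/e * (norm (H *v y))^2" .
  qed
qed

lemma growth:
  fixes H :: "real^'n^'n"
  assumes sym: "\<And>u v. (H *v u) \<bullet> v = u \<bullet> (H *v v)"
    and bnd: "\<And>v. norm (H *v v) \<le> L * norm v" and a: "a > 0" and L: "L > 0"
    and c: "2/a - L > 0" and cov: "\<Union>(set Bs) = UNIV"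
  shows "\<exists>g>0. \<forall>k. (1+g)^k * (- Qf H y0) \<le> L * (norm ((Tl a H Bs ^^ k) y0))^2"
proof -
  obtain A where A: "A \<ge> 0" and TA: "\<And>y. Qf H (Tl a H Bs y) \<le> Qf H y \<and>
     (\<forall>B\<in>set Bs. (norm (projB B (H *v y)))^2 \<le> A * (Qf H y - Qf H (Tl a H Bs y)))"
    using Tl_decrease[OF sym bnd a L c] by blast
  obtain k where k: "k > 0" "\<And>y. - Qf H y \<le> k * (norm (H *v y))^2"
    using PL_ineq[OF sym] by blast
  define A2 where "A2 = real (card (set Bs)) * A + 1"
  have A2: "A2 > 0" unfolding A2_def using A by (simp add: add_nonneg_pos)
  define g where "g = 1 / (k * A2)"
  have g: "g > 0" unfolding g_def using k A2 by simp
  have step: "Qf H (Tl a H Bs y) \<le> (1+g) * Qf H y" for y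
  proof -
    define D where "D = Qf H y - Qf H (Tl a H Bs y)"
    have D0: "D \<ge> 0" using TA[of y] unfolding D_def by simp
    have "(norm (H *v y))^2 \<le> (\<Sum>B\<in>set Bs. (norm (projB B (H *v y)))^2)"
      by (rule cover_sq[OF cov])
    also have "\<dots> \<le> (\<Sum>B\<in>set Bs. A * D)"
      by (rule sum_mono) (use TA[of y] in \<open>simp add: D_def\<close>)
    also have "\<dots> = real (card (set Bs)) * A * D" by simp
    also have "\<dots> \<le> A2 * D" unfolding A2_def using D0 by (simp add: algebra_simps)
    finally have h1: "(norm (H *v y))^2 \<le> A2 * D" .
    have "- Qf H y \<le> k * (A2 * D)"
      using k(2)[of y] mult_left_mono[OF h1, of k] k(1) by linarith
    hence "- Qf H y * g \<le> D" unfolding g_def using k(1) A2 by (simp add: field_simps)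
    thus ?thesis unfolding D_def by (simp add: algebra_simps)
  qed
  have iter: "Qf H ((Tl a H Bs ^^ j) y0) \<le> (1+g)^j * Qf H y0" for j
  proof (induction j)
    case 0 thus ?case by simp
  next
    case (Suc j)
    have "Qf H ((Tl a H Bs ^^ Suc j) y0) \<le> (1+g) * Qf H ((Tl a H Bs ^^ j) y0)"
      using step by simp
    also have "\<dots> \<le> (1+g) * ((1+g)^j * Qf H y0)"
      using Suc g by (intro mult_left_mono) auto
    finally show ?case by simp
  qed
  have low: "- Qf H z \<le> L * (norm z)^2" for z
  proof -
    have "- Qf H z \<le> norm z * norm (H *v z)"
      unfolding Qf_def using norm_cauchy_schwarz[of "-z" "H *v z"] by simp
    also have "\<dots> \<le> norm z * (L * norm z)" by (intro mult_left_mono bnd) simp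
    finally show ?thesis by (simp add: power2_eq_square algebra_simps)
  qed
  show ?thesis
  proof (intro exI[of _ g] conjI allI g)
    fix j
    show "(1+g)^j * (- Qf H y0) \<le> L * (norm ((Tl a H Bs ^^ j) y0))^2"
      using iter[of j] low[of "(Tl a H Bs ^^ j) y0"] by simp
  qed
qed



lemma projB_linear: "linear (projB B)"
  by (rule linearI) (simp_all add: projB_def Finite_Cartesian_Product.vec_eq_iff)

lemma projB_bl: "bounded_linear (projB B :: real^'n \<Rightarrow> real^'n)"
  using projB_linear linear_conv_bounded_linear by blast

lemma block_step_eq: "block_step a gf B x = x - a *\<^sub>R projB B (gf x)"
  unfolding block_step_def projB_def by simp

lemma step_deriv:
  assumes D: "(gf has_derivative (\<lambda>h. H *v h)) (at x)"
  shows "(block_step a gf B has_derivative Sst a H B) (at x)"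
proof -
  have "((\<lambda>x. projB B (gf x)) has_derivative (\<lambda>h. projB B (H *v h))) (at x)"
    by (rule bounded_linear.has_derivative[OF projB_bl D])
  hence "((\<lambda>x. x - a *\<^sub>R projB B (gf x)) has_derivative (\<lambda>h. h - a *\<^sub>R projB B (H *v h))) (at x)"
    by (intro derivative_intros)
  moreover have "Sst a H B = (\<lambda>h. h - a *\<^sub>R projB B (H *v h))" by (simp add: Sst_def fun_eq_iff)
  moreover have "block_step a gf B = (\<lambda>x. x - a *\<^sub>R projB B (gf x))" by (simp add: block_step_eq fun_eq_iff)
  ultimately show ?thesis by simp
qed

lemma fold_deriv:
  assumes D: "(gf has_derivative (\<lambda>h. H *v h)) (at x)" and z: "gf x = 0"
  shows "((\<lambda>y. fold (\<lambda>B y. block_step a gf B y) Bs y) has_derivative Tl a H Bs) (at x)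
     \<and> fold (\<lambda>B y. block_step a gf B y) Bs x = x"
proof (induction Bs)
  case Nil
  show ?case by (simp add: has_derivative_ident id_def)
next
  case (Cons B Bs)
  have sx: "block_step a gf B x = x" using z by (simp add: block_step_def Finite_Cartesian_Product.vec_eq_iff)
  have d1: "(block_step a gf B has_derivative Sst a H B) (at x)" by (rule step_deriv[OF D])
  have d2: "((\<lambda>y. fold (\<lambda>B y. block_step a gf B y) Bs y) has_derivative Tl a H Bs) (at (block_step a gf B x))"
    using Cons sx by simp
  have "((\<lambda>y. fold (\<lambda>B y. block_step a gf B y) Bs (block_step a gf B y)) has_derivative (\<lambda>h. Tl a H Bs (Sst a H B h))) (at x)"
    by (rule has_derivative_compose[OF d1 d2])
  thus ?case using Cons sx by (simp add: comp_def)
qed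

lemma jac_block_map:
  assumes D: "(gf has_derivative (\<lambda>h. H *v h)) (at x)" and z: "gf x = 0"
  shows "\<And>v. jacobian (block_map a gf Bs) (at x) *v v = Tl a H Bs v"
proof -
  have d: "(block_map a gf Bs has_derivative Tl a H Bs) (at x)"
    using fold_deriv[OF D z] unfolding block_map_def by (simp add: fun_eq_iff)
  hence "block_map a gf Bs differentiable (at x)" unfolding differentiable_def by blast
  hence "(block_map a gf Bs has_derivative (\<lambda>h. jacobian (block_map a gf Bs) (at x) *v h)) (at x)"
    using jacobian_works by blast
  from has_derivative_unique[OF this d] show "\<And>v. jacobian (block_map a gf Bs) (at x) *v v = Tl a H Bs v"
    by metis
qed

lemma deriv_bound:
  fixes gf :: "real^'n \<Rightarrow> real^'n"
  assumes D: "(gf has_derivative (\<lambda>h. H *v h)) (at x)"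
    and lip: "\<And>x y. norm (gf x - gf y) \<le> L * norm (x - y)"
  shows "norm (H *v v) \<le> L * norm v"
proof (cases "v = 0")
  case True thus ?thesis by simp
next
  case False
  hence nv: "norm v > 0" by simp
  have "norm (H *v v) \<le> L * norm v + e" if e: "e > 0" for e
  proof -
    define e' where "e' = e / norm v"
    have e': "e' > 0" unfolding e'_def using e nv by simp
    obtain d where d: "d > 0" "\<And>y. norm (y - x) < d \<Longrightarrow> norm (gf y - gf x - H *v (y - x)) \<le> e' * norm (y - x)"
      using D e' unfolding has_derivative_at_alt by blast
    define s where "s = d / (2 * norm v)"
    have s: "s > 0" unfolding s_def using d nv by simp
    have ns: "norm ((x + s *\<^sub>R v) - x) = s * norm v" using s by simp
    have "s * norm v < d" unfolding s_def using nv d by (simp add: field_simps)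
    hence r: "norm (gf (x + s *\<^sub>R v) - gf x - H *v (s *\<^sub>R v)) \<le> e' * (s * norm v)"
      using d(2)[of "x + s *\<^sub>R v"] ns abs_of_pos[OF s] by simp
    have "s * norm (H *v v) = norm (H *v (s *\<^sub>R v))" using s by (simp add: mv_scaleR)
    also have "\<dots> \<le> norm (gf (x + s *\<^sub>R v) - gf x) + norm (gf (x + s *\<^sub>R v) - gf x - H *v (s *\<^sub>R v))"
    proof -
      have "H *v (s *\<^sub>R v) = (gf (x + s *\<^sub>R v) - gf x) - (gf (x + s *\<^sub>R v) - gf x - H *v (s *\<^sub>R v))"
        by simp
      thus ?thesis using norm_triangle_ineq4 by metis
    qed
    also have "\<dots> \<le> L * (s * norm v) + e' * (s * norm v)"
      using lip[of "x + s *\<^sub>R v" x] r s by simp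
    finally have "s * norm (H *v v) \<le> s * (L * norm v + e' * norm v)" by (simp add: algebra_simps)
    hence "norm (H *v v) \<le> L * norm v + e' * norm v" using s by simp
    thus ?thesis unfolding e'_def using nv by simp
  qed
  thus ?thesis by (rule field_le_epsilon)
qed



definition hh :: "(real^'n \<Rightarrow> real) \<Rightarrow> real^'n \<Rightarrow> real^'n \<Rightarrow> real^'n \<Rightarrow> real \<Rightarrow> real" where
  "hh f x0 u v t = f (x0 + t *\<^sub>R (u + v)) - f (x0 + t *\<^sub>R u) - f (x0 + t *\<^sub>R v) + f x0"

lemma hh_sym: "hh f x0 u v t = hh f x0 v u t"
  unfolding hh_def by (simp add: add.commute)

lemma line_deriv:
  fixes f :: "real^'n \<Rightarrow> real"
  assumes G: "\<And>x. GDERIV f x :> gf x"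
  shows "((\<lambda>s. f (x0 + s *\<^sub>R u + w)) has_real_derivative (u \<bullet> gf (x0 + s *\<^sub>R u + w))) (at s)"
proof -
  have d1: "((\<lambda>s. x0 + s *\<^sub>R u + w) has_derivative (\<lambda>h. h *\<^sub>R u)) (at s)"
    by (auto intro!: derivative_eq_intros)
  have d2: "(f has_derivative (\<lambda>h. h \<bullet> gf (x0 + s *\<^sub>R u + w))) (at (x0 + s *\<^sub>R u + w))"
    using G unfolding gderiv_def by blast
  have "((\<lambda>s. f (x0 + s *\<^sub>R u + w)) has_derivative (\<lambda>h. (h *\<^sub>R u) \<bullet> gf (x0 + s *\<^sub>R u + w))) (at s)"
    by (rule has_derivative_compose[OF d1 d2])
  moreover have "(\<lambda>h. (h *\<^sub>R u) \<bullet> gf (x0 + s *\<^sub>R u + w)) = (*) (u \<bullet> gf (x0 + s *\<^sub>R u + w))"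
    by (simp add: fun_eq_iff)
  ultimately show ?thesis unfolding has_field_derivative_def by simp
qed

lemma hess_key:
  fixes f :: "real^'n \<Rightarrow> real"
  assumes G: "\<And>x. GDERIV f x :> gf x" and D: "(gf has_derivative (\<lambda>h. H *v h)) (at x0)"
    and eps: "\<epsilon> > 0"
  shows "\<exists>\<delta>>0. \<forall>t. 0 < t \<and> t < \<delta> \<longrightarrow> \<bar>hh f x0 u v t - t^2 * (u \<bullet> (H *v v))\<bar> \<le> \<epsilon> * t^2"
proof -
  define K where "K = norm u * (2 * norm u + norm v) + 1"
  have K: "K > 0" unfolding K_def by (simp add: add_nonneg_pos)
  define e where "e = \<epsilon> / K"
  have e: "e > 0" unfolding e_def using K eps by simp
  obtain d where d: "d > 0" "\<And>y. norm (y - x0) < d \<Longrightarrow> norm (gf y - gf x0 - H *v (y - x0)) \<le> e * norm (y - x0)"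
    using D e unfolding has_derivative_at_alt by blast
  define \<delta> where "\<delta> = d / (norm u + norm v + 1)"
  have nuv: "norm u + norm v + 1 > 0" by (simp add: add_nonneg_pos)
  have \<delta>: "\<delta> > 0" unfolding \<delta>_def using d nuv by simp
  show ?thesis
  proof (intro exI[of _ \<delta>] conjI allI impI \<delta>)
    fix t assume t: "0 < t \<and> t < \<delta>"
    define \<phi> where "\<phi> = (\<lambda>s. f (x0 + s *\<^sub>R u + t *\<^sub>R v) - f (x0 + s *\<^sub>R u + 0))"
    define \<phi>' where "\<phi>' = (\<lambda>s. u \<bullet> gf (x0 + s *\<^sub>R u + t *\<^sub>R v) - u \<bullet> gf (x0 + s *\<^sub>R u + 0))"
    have der: "DERIV \<phi> s :> \<phi>' s" for s
      unfolding \<phi>_def \<phi>'_def by (intro DERIV_diff line_deriv G)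
    obtain z where z: "0 < z" "z < t" "\<phi> t - \<phi> 0 = (t - 0) * \<phi>' z"
      using MVT2[of 0 t \<phi> \<phi>'] der t by blast
    have hh_eq: "hh f x0 u v t = \<phi> t - \<phi> 0"
      unfolding hh_def \<phi>_def by (simp add: scaleR_right_distrib add.assoc)
    define p1 where "p1 = x0 + z *\<^sub>R u + t *\<^sub>R v"
    define p2 where "p2 = x0 + z *\<^sub>R u"
    have tle: "t * (norm u + norm v + 1) < d"
      using t nuv unfolding \<delta>_def by (simp add: pos_less_divide_eq)
    have n1: "norm (p1 - x0) \<le> t * (norm u + norm v)"
    proof -
      have "norm (p1 - x0) \<le> norm (z *\<^sub>R u) + norm (t *\<^sub>R v)" unfolding p1_def
        using norm_triangle_ineq[of "z *\<^sub>R u" "t *\<^sub>R v"] by simp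
      also have "\<dots> \<le> t * norm u + t * norm v" using z t by (simp add: mult_right_mono)
      finally show ?thesis by (simp add: algebra_simps)
    qed
    have n2: "norm (p2 - x0) \<le> t * norm u" unfolding p2_def using z t by (simp add: mult_right_mono)
    have n1d: "norm (p1 - x0) < d"
      using n1 tle t by (smt (verit) mult_left_mono norm_ge_zero)
    have n2d: "norm (p2 - x0) < d"
      using n2 tle t by (smt (verit) mult_left_mono norm_ge_zero)
    define r1 where "r1 = gf p1 - gf x0 - H *v (p1 - x0)"
    define r2 where "r2 = gf p2 - gf x0 - H *v (p2 - x0)"
    have r1: "norm r1 \<le> e * (t * (norm u + norm v))"
      using d(2)[OF n1d] n1 e unfolding r1_def by (smt (verit) mult_left_mono)
    have r2: "norm r2 \<le> e * (t * norm u)"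
      using d(2)[OF n2d] n2 e unfolding r2_def by (smt (verit) mult_left_mono)
    have p12: "(p1 - x0) - (p2 - x0) = t *\<^sub>R v" unfolding p1_def p2_def by simp
    have gdiff: "gf p1 - gf p2 = t *\<^sub>R (H *v v) + (r1 - r2)"
    proof -
      have "gf p1 - gf p2 = (H *v (p1 - x0) - H *v (p2 - x0)) + (r1 - r2)"
        unfolding r1_def r2_def by simp
      also have "H *v (p1 - x0) - H *v (p2 - x0) = t *\<^sub>R (H *v v)"
        by (metis p12 matrix_vector_mult_diff_distrib mv_scaleR)
      finally show ?thesis .
    qed
    have phz: "\<phi>' z = t * (u \<bullet> (H *v v)) + u \<bullet> (r1 - r2)"
      unfolding \<phi>'_def using gdiff unfolding p1_def p2_def
      by (simp add: inner_diff_right[symmetric] inner_add_right)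
    have "\<bar>u \<bullet> (r1 - r2)\<bar> \<le> norm u * norm (r1 - r2)" by (rule Cauchy_Schwarz_ineq2)
    also have "\<dots> \<le> norm u * (norm r1 + norm r2)" by (intro mult_left_mono norm_triangle_ineq4) simp
    also have "\<dots> \<le> norm u * (e * (t * (norm u + norm v)) + e * (t * norm u))"
      using r1 r2 by (intro mult_left_mono) auto
    also have "\<dots> = e * t * (norm u * (2 * norm u + norm v))" by (simp add: algebra_simps)
    also have "\<dots> \<le> e * t * K" unfolding K_def using e t by (intro mult_left_mono) auto
    also have "\<dots> = \<epsilon> * t" unfolding e_def using K by simp
    finally have ur: "\<bar>u \<bullet> (r1 - r2)\<bar> \<le> \<epsilon> * t" .
    have "hh f x0 u v t - t^2 * (u \<bullet> (H *v v)) = t * (u \<bullet> (r1 - r2))"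
      using hh_eq z(3) phz by (simp add: power2_eq_square algebra_simps)
    hence "\<bar>hh f x0 u v t - t^2 * (u \<bullet> (H *v v))\<bar> = t * \<bar>u \<bullet> (r1 - r2)\<bar>"
      using t by (simp add: abs_mult)
    also have "\<dots> \<le> t * (\<epsilon> * t)" using ur t by (intro mult_left_mono) auto
    finally show "\<bar>hh f x0 u v t - t^2 * (u \<bullet> (H *v v))\<bar> \<le> \<epsilon> * t^2"
      by (simp add: power2_eq_square algebra_simps)
  qed
qed

lemma hess_sym:
  fixes f :: "real^'n \<Rightarrow> real"
  assumes G: "\<And>x. GDERIV f x :> gf x" and D: "(gf has_derivative (\<lambda>h. H *v h)) (at x0)"
  shows "(H *v u) \<bullet> v = u \<bullet> (H *v v)"
proof -
  define a where "a = u \<bullet> (H *v v)"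
  define b where "b = v \<bullet> (H *v u)"
  have "\<bar>a - b\<bar> \<le> 0 + \<epsilon>" if eps: "\<epsilon> > 0" for \<epsilon>
  proof -
    obtain d1 where d1: "d1 > 0" "\<And>t. 0 < t \<and> t < d1 \<Longrightarrow> \<bar>hh f x0 u v t - t^2 * a\<bar> \<le> (\<epsilon>/2) * t^2"
      using hess_key[OF G D, of "\<epsilon>/2" u v] eps unfolding a_def by auto
    obtain d2 where d2: "d2 > 0" "\<And>t. 0 < t \<and> t < d2 \<Longrightarrow> \<bar>hh f x0 v u t - t^2 * b\<bar> \<le> (\<epsilon>/2) * t^2"
      using hess_key[OF G D, of "\<epsilon>/2" v u] eps unfolding b_def by auto
    define t where "t = min d1 d2 / 2"
    have t: "0 < t" "t < d1" "t < d2" unfolding t_def using d1 d2 by auto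
    have "\<bar>t^2 * a - t^2 * b\<bar> \<le> \<epsilon> * t^2"
      using d1(2)[of t] d2(2)[of t] t hh_sym[of f x0 u v t] by linarith
    moreover have "\<bar>t^2 * a - t^2 * b\<bar> = t^2 * \<bar>a - b\<bar>"
      by (simp add: right_diff_distrib[symmetric] abs_mult)
    ultimately have "t^2 * \<bar>a - b\<bar> \<le> t^2 * \<epsilon>" by (simp add: mult.commute)
    thus ?thesis using t by simp
  qed
  hence "\<bar>a - b\<bar> \<le> 0" by (rule field_le_epsilon)
  hence "a = b" by simp
  thus ?thesis unfolding a_def b_def by (simp add: inner_commute)
qed



lemma Qf_scale: "Qf H (c *\<^sub>R z) = c^2 * Qf H z"
  unfolding Qf_def by (simp add: mv_scaleR power2_eq_square)

lemma sym_eig_exists: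
  fixes H :: "real^'n^'n"
  assumes sym: "\<And>u v. (H *v u) \<bullet> v = u \<bullet> (H *v v)"
  shows "\<exists>\<mu> v. v \<noteq> 0 \<and> H *v v = \<mu> *s v"
proof -
  define S where "S = sphere (0::real^'n) 1"
  have cS: "compact S" unfolding S_def by simp
  have neS: "S \<noteq> {}" unfolding S_def by (simp add: sphere_eq_empty)
  have cont: "continuous_on S (Qf H)" unfolding Qf_def
    by (intro continuous_intros linear_continuous_on matrix_vector_mul_bounded_linear)
  obtain x where xS: "x \<in> S" and xmin: "\<And>y. y \<in> S \<Longrightarrow> Qf H x \<le> Qf H y"
    using continuous_attains_inf[OF cS neS cont] by blast
  define m where "m = Qf H x"
  have nx: "norm x = 1" using xS unfolding S_def by simp
  have xx: "x \<bullet> x = 1" using nx by (simp add: dot_square_norm)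
  have ge: "Qf H z - m * (z \<bullet> z) \<ge> 0" for z
  proof (cases "z = 0")
    case True thus ?thesis by (simp add: Qf_def)
  next
    case False
    define u where "u = (1 / norm z) *\<^sub>R z"
    have uS: "u \<in> S" unfolding u_def S_def using False by simp
    have zu: "z = norm z *\<^sub>R u" unfolding u_def using False by simp
    have "m \<le> Qf H u" unfolding m_def using xmin[OF uS] .
    hence "m * (norm z)^2 \<le> (norm z)^2 * Qf H u" by (simp add: mult.commute mult_right_mono)
    also have "\<dots> = Qf H z" by (subst (2) zu) (simp add: Qf_scale)
    finally show ?thesis by (simp add: dot_square_norm)
  qed
  define r where "r = H *v x - m *s x"
  define c where "c = Qf H r - m * (r \<bullet> r)"
  have expand: "Qf H (x + t *\<^sub>R r) - m * ((x + t *\<^sub>R r) \<bullet> (x + t *\<^sub>R r)) = 2 * t * (r \<bullet> r) + t^2 * c" for t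
  proof -
    have a1: "Qf H (x + t *\<^sub>R r) = Qf H x + t * (x \<bullet> (H *v r)) + t * (r \<bullet> (H *v x)) + t^2 * Qf H r"
      unfolding Qf_def by (simp add: matrix_vector_right_distrib mv_scaleR inner_add_left inner_add_right power2_eq_square algebra_simps)
    have a2: "x \<bullet> (H *v r) = r \<bullet> (H *v x)" using sym[of x r] by (simp add: inner_commute)
    have a3: "(x + t *\<^sub>R r) \<bullet> (x + t *\<^sub>R r) = 1 + 2 * t * (x \<bullet> r) + t^2 * (r \<bullet> r)"
      using xx by (simp add: inner_add_left inner_add_right power2_eq_square inner_commute algebra_simps)
    have a4: "r \<bullet> r = r \<bullet> (H *v x) - m * (x \<bullet> r)"
      unfolding r_def by (simp add: inner_diff_left inner_diff_right scalar_mult_eq_scaleR inner_commute algebra_simps)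
    have a4': "r \<bullet> (H *v x) = r \<bullet> r + m * (x \<bullet> r)" using a4 by simp
    have a3': "(x + t *\<^sub>R r) \<bullet> (x + t *\<^sub>R r) = 1 + 2 * t * (x \<bullet> r) + t^2 * (r \<bullet> r)" by (rule a3)
    have a1': "Qf H (x + t *\<^sub>R r) = m + 2 * t * (r \<bullet> r + m * (x \<bullet> r)) + t^2 * Qf H r"
      using a1 a2 a4' unfolding m_def by (simp add: algebra_simps)
    show ?thesis unfolding c_def a1' a3' by (simp add: algebra_simps power2_eq_square)
  qed
  have "r \<bullet> r \<le> 0 + \<epsilon>" if eps: "\<epsilon> > 0" for \<epsilon>
  proof -
    define s where "s = \<epsilon> / (\<bar>c\<bar> + 1)"
    have s: "s > 0" unfolding s_def using eps by (simp add: add_nonneg_pos)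
    have "0 \<le> 2 * (-s) * (r \<bullet> r) + (-s)^2 * c" using ge[of "x + (-s) *\<^sub>R r"] expand[of "-s"] by simp
    hence "2 * s * (r \<bullet> r) \<le> s^2 * c" by simp
    also have "\<dots> \<le> s^2 * (\<bar>c\<bar> + 1)" by (intro mult_left_mono) auto
    also have "\<dots> = s * \<epsilon>" unfolding s_def by (simp add: power2_eq_square)
    finally have "2 * (r \<bullet> r) \<le> \<epsilon>" using s by simp
    moreover have "r \<bullet> r \<ge> 0" by simp
    ultimately show ?thesis by linarith
  qed
  hence "r \<bullet> r \<le> 0" by (rule field_le_epsilon)
  hence "r = 0" using inner_ge_zero[of r] inner_eq_zero_iff[of r] by linarith
  hence "H *v x = m *s x" unfolding r_def by simp
  moreover have "x \<noteq> 0" using nx by auto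
  ultimately show ?thesis by blast
qed




definition enm :: "nat \<Rightarrow> 'n::finite" where
  "enm = (SOME e. bij_betw e {..<CARD('n)} (UNIV::'n set))"

lemma enm_bij: "bij_betw (enm :: nat \<Rightarrow> 'n::finite) {..<CARD('n)} UNIV"
proof -
  have "\<exists>e. bij_betw e {..<CARD('n)} (UNIV::'n set)"
    using ex_bij_betw_nat_finite[of "UNIV::'n set"] by (simp add: lessThan_atLeast0)
  thus ?thesis unfolding enm_def by (rule someI_ex)
qed

definition cm :: "real^'n^'n \<Rightarrow> complex mat" where
  "cm A = Matrix.mat CARD('n) CARD('n) (\<lambda>(i,j). complex_of_real (A $ enm i $ enm j))"

definition cv :: "complex^'n \<Rightarrow> complex Matrix.vec" where
  "cv w = Matrix.vec CARD('n) (\<lambda>i. w $ enm i)"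

definition ofr :: "real^'n \<Rightarrow> complex^'n" where
  "ofr y = (\<chi> i. complex_of_real (y $ i))"

lemma cm_carrier: "cm (A::real^'n^'n) \<in> carrier_mat CARD('n) CARD('n)"
  unfolding cm_def by simp

lemma cv_carrier: "cv (w::complex^'n) \<in> carrier_vec CARD('n)"
  unfolding cv_def by simp

lemma sum_enm: "(\<Sum>j<CARD('n). g (enm j :: 'n::finite)) = (\<Sum>k\<in>UNIV. g k)"
  using sum.reindex_bij_betw[OF enm_bij, of g] by simp

lemma cm_mult: "cm (A::real^'n^'n) *\<^sub>v cv w = cv (map_matrix complex_of_real A *v w)"
proof (rule eq_vecI)
  show "dim_vec (cm A *\<^sub>v cv w) = dim_vec (cv (map_matrix complex_of_real A *v w))"
    by (simp add: cm_def cv_def)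
  fix i assume i: "i < dim_vec (cv (map_matrix complex_of_real A *v w))"
  hence i': "i < CARD('n)" by (simp add: cv_def)
  have "(cm A *\<^sub>v cv w) $ i = (\<Sum>j<CARD('n). complex_of_real (A $ enm i $ enm j) * w $ enm j)"
    using i' by (simp add: cm_def cv_def index_mult_mat_vec scalar_prod_def lessThan_atLeast0)
  also have "\<dots> = (\<Sum>k\<in>UNIV. complex_of_real (A $ enm i $ k) * w $ k)"
    by (rule sum_enm)
  also have "\<dots> = cv (map_matrix complex_of_real A *v w) $ i"
    using i' by (simp add: cv_def matrix_vector_mult_def)
  finally show "(cm A *\<^sub>v cv w) $ i = cv (map_matrix complex_of_real A *v w) $ i" .
qed

lemma cv_index: "i < CARD('n) \<Longrightarrow> cv (w::complex^'n) $ i = w $ enm i"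
  unfolding cv_def by simp

lemma enm_surj: "\<exists>i<CARD('n). enm i = (l::'n::finite)"
proof -
  have "l \<in> enm ` {..<CARD('n)}" using enm_bij[where 'n='n] unfolding bij_betw_def by auto
  thus ?thesis by auto
qed

lemma cv_inj: "cv (a::complex^'n) = cv b \<Longrightarrow> a = b"
proof (rule Finite_Cartesian_Product.vec_eq_iff[THEN iffD2], rule allI)
  fix l :: 'n
  assume e: "cv a = cv b"
  obtain i where i: "i < CARD('n)" "enm i = l" using enm_surj by blast
  have "a $ enm i = b $ enm i" using cv_index[OF i(1), of a] cv_index[OF i(1), of b] e by simp
  thus "a $ l = b $ l" using i by simp
qed

lemma cv_surj: "v \<in> carrier_vec CARD('n::finite) \<Longrightarrow> \<exists>w::complex^'n. cv w = v"
proof -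
  assume v: "v \<in> carrier_vec CARD('n)"
  define w :: "complex^'n" where "w = (\<chi> k. v $ (inv_into {..<CARD('n)} enm k))"
  have inj: "inj_on (enm :: nat \<Rightarrow> 'n) {..<CARD('n)}" using enm_bij bij_betw_imp_inj_on by blast
  have "cv w = v"
  proof (rule eq_vecI)
    fix i assume "i < dim_vec v"
    hence i: "i < CARD('n)" using v by simp
    show "cv w $ i = v $ i" unfolding cv_index[OF i] w_def using inv_into_f_f[OF inj, of i] i by simp
  qed (use v in \<open>simp add: cv_def\<close>)
  thus ?thesis by blast
qed

lemma cv_zero: "cv (0::complex^'n) = 0\<^sub>v CARD('n)"
  by (rule eq_vecI) (simp_all add: cv_def)

lemma cv_scale: "cv (c *s (w::complex^'n)) = c \<cdot>\<^sub>v cv w"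
  by (rule eq_vecI) (simp_all add: cv_def)

lemma eig_bridge:
  assumes "eigenvalue (cm (A::real^'n^'n)) \<mu>"
  shows "complex_eigenvalue A \<mu>"
proof -
  obtain v where v: "v \<in> carrier_vec CARD('n)" "v \<noteq> 0\<^sub>v CARD('n)" "cm A *\<^sub>v v = \<mu> \<cdot>\<^sub>v v"
    using assms unfolding eigenvalue_def eigenvector_def by (auto simp: cm_def)
  obtain w :: "complex^'n" where w: "cv w = v" using cv_surj[OF v(1)] by blast
  have "cv (map_matrix complex_of_real A *v w) = cv (\<mu> *s w)"
    using v(3) w cm_mult[of A w] cv_scale[of \<mu> w] by simp
  hence "map_matrix complex_of_real A *v w = \<mu> *s w" by (rule cv_inj)
  moreover have "w \<noteq> 0" using v(2) w cv_zero by auto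
  ultimately show ?thesis unfolding complex_eigenvalue_def by blast
qed

lemma ofr_mult: "map_matrix complex_of_real A *v ofr y = ofr (A *v y)"
  by (simp add: Finite_Cartesian_Product.vec_eq_iff ofr_def matrix_vector_mult_def)

lemma ofr_zero: "ofr y = 0 \<Longrightarrow> y = 0"
  by (simp add: Finite_Cartesian_Product.vec_eq_iff ofr_def)

lemma ofr_scale: "ofr (c *s y) = complex_of_real c *s ofr y"
  by (simp add: Finite_Cartesian_Product.vec_eq_iff ofr_def)

lemma real_eig_bridge:
  assumes "real_eigenvalue (A::real^'n^'n) \<mu>"
  shows "eigenvalue (cm A) (complex_of_real \<mu>)"
proof -
  obtain v where v: "v \<noteq> 0" "A *v v = \<mu> *s v" using assms unfolding real_eigenvalue_def by blast
  have ne: "cv (ofr v) \<noteq> 0\<^sub>v CARD('n)"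
  proof
    assume "cv (ofr v) = 0\<^sub>v CARD('n)"
    hence "ofr v = 0" using cv_zero cv_inj by metis
    thus False using ofr_zero v(1) by blast
  qed
  have "cm A *\<^sub>v cv (ofr v) = complex_of_real \<mu> \<cdot>\<^sub>v cv (ofr v)"
    by (simp add: cm_mult ofr_mult v(2) ofr_scale cv_scale)
  thus ?thesis unfolding eigenvalue_def eigenvector_def using ne cv_carrier
    by (auto simp: cm_def)
qed

lemma real_eig_finite: "finite {\<mu>. real_eigenvalue (A::real^'n^'n) \<mu>}"
proof -
  have "complex_of_real ` {\<mu>. real_eigenvalue A \<mu>} \<subseteq> spectrum (cm A)"
    using real_eig_bridge unfolding spectrum_def by auto
  hence "finite (complex_of_real ` {\<mu>. real_eigenvalue A \<mu>})"
    using card_finite_spectrum(1)[OF cm_carrier] finite_subset by blast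
  thus ?thesis by (rule finite_imageD) (simp add: inj_on_def)
qed

lemma pow_bridge: "cm (A::real^'n^'n) ^\<^sub>m k *\<^sub>v cv w = cv (((*v) (map_matrix complex_of_real A) ^^ k) w)"
proof (induction k arbitrary: w)
  case 0
  show ?case using cv_carrier[of w] by (simp add: cm_def)
next
  case (Suc k)
  have "cm A ^\<^sub>m Suc k *\<^sub>v cv w = (cm A ^\<^sub>m k * cm A) *\<^sub>v cv w" by simp
  also have "\<dots> = cm A ^\<^sub>m k *\<^sub>v (cm A *\<^sub>v cv w)"
    by (rule assoc_mult_mat_vec[OF pow_carrier_mat[OF cm_carrier] cm_carrier cv_carrier])
  also have "\<dots> = cv (((*v) (map_matrix complex_of_real A) ^^ k) (map_matrix complex_of_real A *v w))"
    by (simp add: cm_mult Suc)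
  finally show ?case by (simp add: funpow_Suc_right del: funpow.simps)
qed

lemma ofr_iter: "((*v) (map_matrix complex_of_real (A::real^'n^'n)) ^^ k) (ofr y) = ofr (((*v) A ^^ k) y)"
proof (induction k)
  case 0 show ?case by simp
next
  case (Suc k)
  have "((*v) (map_matrix complex_of_real A) ^^ Suc k) (ofr y) = map_matrix complex_of_real A *v ((*v) (map_matrix complex_of_real A) ^^ k) (ofr y)"
    by simp
  also have "\<dots> = ofr (A *v ((*v) A ^^ k) y)" unfolding Suc by (rule ofr_mult)
  finally show ?case by simp
qed

lemma entry_bound:
  assumes X: "X \<in> carrier_mat n n" and nb: "norm_bound X b" and i: "i < n" and x: "x \<in> carrier_vec n"
  shows "cmod ((X *\<^sub>v x) $ i) \<le> b * (\<Sum>j<n. cmod (x $ j))"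
proof -
  have "(X *\<^sub>v x) $ i = (\<Sum>j\<in>{0..<n}. X $$ (i,j) * x $ j)"
    using X i x by (simp add: scalar_prod_def)
  hence "cmod ((X *\<^sub>v x) $ i) \<le> (\<Sum>j\<in>{0..<n}. cmod (X $$ (i,j)) * cmod (x $ j))"
    by (simp add: norm_sum norm_mult order_trans[OF norm_sum])
  also have "\<dots> \<le> (\<Sum>j\<in>{0..<n}. b * cmod (x $ j))"
  proof (rule sum_mono)
    fix j assume "j \<in> {0..<n}"
    hence "cmod (X $$ (i,j)) \<le> b" using nb X i unfolding norm_bound_def by auto
    thus "cmod (X $$ (i,j)) * cmod (x $ j) \<le> b * cmod (x $ j)" by (rule mult_right_mono) simp
  qed
  finally show ?thesis by (simp add: sum_distrib_left lessThan_atLeast0)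
qed

lemma exp_poly:
  assumes r: "r > 1" and p: "p > 0"
  shows "(\<lambda>k. real k ^ p / r ^ k) \<longlonglongrightarrow> 0"
proof -
  define s where "s = root p r"
  have s1: "s > 1" unfolding s_def using real_root_gt_1_iff[OF p] r by simp
  have sp: "s ^ p = r" unfolding s_def using real_root_pow_pos2[OF p] r by simp
  have "(\<lambda>n. of_nat n / s ^ n) \<longlonglongrightarrow> 0" using lim_n_over_pown[of s] s1 by simp
  hence "(\<lambda>n. (real n / s ^ n) ^ p) \<longlonglongrightarrow> 0 ^ p" by (intro tendsto_power)
  moreover have "(real n / s ^ n) ^ p = real n ^ p / r ^ n" for n
    by (simp add: power_divide sp[symmetric] power_mult[symmetric] mult.commute)
  ultimately show ?thesis using p by (simp add: power_0_left)
qed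



lemma poly_sq_bound:
  assumes k: "k \<ge> (1::nat)"
  shows "(c1 + c2 * real k ^ m)^2 \<le> (\<bar>c1\<bar> + \<bar>c2\<bar>)^2 * real k ^ (2*m+2)"
proof -
  have k1: "real k ^ m \<ge> 1" using k by simp
  have "\<bar>c1 + c2 * real k ^ m\<bar> \<le> \<bar>c1\<bar> + \<bar>c2\<bar> * real k ^ m"
    using abs_triangle_ineq[of c1 "c2 * real k ^ m"] by (simp add: abs_mult)
  also have "\<dots> \<le> (\<bar>c1\<bar> + \<bar>c2\<bar>) * real k ^ m" using k1
    by (simp add: algebra_simps) (metis abs_ge_zero mult_left_mono mult.right_neutral)
  finally have "\<bar>c1 + c2 * real k ^ m\<bar> \<le> (\<bar>c1\<bar> + \<bar>c2\<bar>) * real k ^ m" .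
  hence "(c1 + c2 * real k ^ m)^2 \<le> ((\<bar>c1\<bar> + \<bar>c2\<bar>) * real k ^ m)^2"
    by (metis abs_ge_zero power2_abs power_mono)
  also have "\<dots> = (\<bar>c1\<bar> + \<bar>c2\<bar>)^2 * real k ^ (2*m)" by (simp add: power_mult_distrib power_mult[symmetric] mult.commute)
  also have "\<dots> \<le> (\<bar>c1\<bar> + \<bar>c2\<bar>)^2 * real k ^ (2*m+2)"
    using k by (intro mult_left_mono power_increasing) auto
  finally show ?thesis .
qed

theorem proposition3:
  fixes f :: "real^'n \<Rightarrow> real" and gf :: "real^'n \<Rightarrow> real^'n"
    and L \<alpha> :: real and Bs :: "'n set list" and xs :: "real^'n"
  assumes "twice_cont_diff f gf"
    and "L > 0" and "lipschitz_grad L gf"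
    and "0 < \<alpha>" and "\<alpha> < 1 / L"
    and "block_partition Bs"
    and "strict_saddle gf xs"
  shows "\<exists>\<mu>. complex_eigenvalue (jacobian (block_map \<alpha> gf Bs) (at xs)) \<mu> \<and> cmod \<mu> > 1"
proof (rule ccontr)
  assume nex: "\<not> (\<exists>\<mu>. complex_eigenvalue (jacobian (block_map \<alpha> gf Bs) (at xs)) \<mu> \<and> cmod \<mu> > 1)"
  note tcd = assms(1)[unfolded twice_cont_diff_def]
  have G: "\<And>x. GDERIV f x :> gf x" using tcd by blast
  define H where "H = jacobian gf (at xs)"
  have D: "(gf has_derivative (\<lambda>h. H *v h)) (at xs)"
    using tcd jacobian_works unfolding H_def by blast
  have sym: "\<And>u v. (H *v u) \<bullet> v = u \<bullet> (H *v v)" by (rule hess_sym[OF G D])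
  have lip: "\<And>x y. norm (gf x - gf y) \<le> L * norm (x - y)"
    using assms(3) unfolding lipschitz_grad_def by blast
  have bnd: "\<And>v. norm (H *v v) \<le> L * norm v" by (rule deriv_bound[OF D lip])
  have L: "L > 0" and a: "\<alpha> > 0" using assms by auto
  have aL: "\<alpha> * L < 1" using assms(5) L by (simp add: field_simps)
  have c: "2/\<alpha> - L > 0"
  proof -
    have "L < 1/\<alpha>" using aL a by (simp add: field_simps)
    also have "\<dots> < 2/\<alpha>" using a by (simp add: divide_strict_right_mono)
    finally show ?thesis by simp
  qed
  have z: "gf xs = 0" and lm: "lambda_min H < 0"
    using assms(7) unfolding strict_saddle_def H_def by auto
  have cov: "\<Union>(set Bs) = UNIV" using assms(6) unfolding block_partition_def by blast
  define S where "S = {\<mu>. real_eigenvalue H \<mu>}"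
  have finS: "finite S" unfolding S_def by (rule real_eig_finite)
  have neS: "S \<noteq> {}" using sym_eig_exists[OF sym] unfolding S_def real_eigenvalue_def by blast
  have "Min S \<in> S" using finS neS by (rule Min_in)
  then obtain v0 where v0: "v0 \<noteq> 0" "H *v v0 = lambda_min H *s v0"
    unfolding S_def lambda_min_def real_eigenvalue_def by blast
  have Q0: "Qf H v0 < 0"
  proof -
    have "Qf H v0 = lambda_min H * (v0 \<bullet> v0)"
      unfolding Qf_def v0(2) by (simp add: scalar_mult_eq_scaleR)
    moreover have "v0 \<bullet> v0 > 0" using v0(1) by simp
    ultimately show ?thesis using lm by (simp add: mult_neg_pos)
  qed
  obtain g where g: "g > 0" and gr: "\<And>k. (1+g)^k * (- Qf H v0) \<le> L * (norm ((Tl \<alpha> H Bs ^^ k) v0))^2"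
    using growth[OF sym bnd a L c cov, of v0] by blast
  define J where "J = jacobian (block_map \<alpha> gf Bs) (at xs)"
  have JT: "(*v) J = Tl \<alpha> H Bs" using jac_block_map[OF D z, of \<alpha> Bs] unfolding J_def by (simp add: fun_eq_iff)
  define N where "N = CARD('n)"
  have N: "N > 0" unfolding N_def by simp
  have sr: "spectral_radius (cm J) \<le> 1"
  proof -
    obtain \<mu> where mu: "\<mu> \<in> spectrum (cm J)" "spectral_radius (cm J) = norm \<mu>"
      using spectral_radius_mem_max(1)[OF cm_carrier, of J] by (auto simp: N_def)
    have "complex_eigenvalue J \<mu>" using mu(1) unfolding spectrum_def by (auto intro: eig_bridge)
    hence "cmod \<mu> \<le> 1" using nex unfolding J_def by auto
    thus ?thesis using mu by simp
  qed
  obtain c1 c2 where cb: "\<And>k. norm_bound (cm J ^\<^sub>m k) (c1 + c2 * real k ^ (CARD('n) - 1))"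
    using spectral_radius_jnf_norm_bound_le_1_upper_triangular[OF cm_carrier sr] by blast
  define x0 where "x0 = cv (ofr v0)"
  define S0 where "S0 = (\<Sum>j<CARD('n). cmod (x0 $ j))"
  define m where "m = CARD('n) - 1"
  have normb: "norm ((Tl \<alpha> H Bs ^^ k) v0) \<le> real N * ((c1 + c2 * real k ^ m) * S0)" for k
  proof -
    define yk where "yk = (Tl \<alpha> H Bs ^^ k) v0"
    have yk: "yk = ((*v) J ^^ k) v0" unfolding yk_def JT ..
    have cvk: "cv (ofr yk) = cm J ^\<^sub>m k *\<^sub>v x0"
      unfolding x0_def pow_bridge ofr_iter yk ..
    have coord: "\<bar>yk $ l\<bar> \<le> (c1 + c2 * real k ^ m) * S0" for l
    proof -
      obtain i where i: "i < CARD('n)" "enm i = l" using enm_surj by blast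
      have "\<bar>yk $ l\<bar> = cmod (cv (ofr yk) $ i)" using i by (simp add: cv_index ofr_def)
      also have "\<dots> \<le> (c1 + c2 * real k ^ m) * S0" unfolding cvk S0_def m_def
        by (rule entry_bound[OF pow_carrier_mat[OF cm_carrier] cb i(1)]) (simp add: x0_def cv_carrier)
      finally show ?thesis .
    qed
    have "norm yk \<le> (\<Sum>l\<in>UNIV. \<bar>yk $ l\<bar>)" by (rule norm_le_l1_cart)
    also have "\<dots> \<le> (\<Sum>l\<in>(UNIV::'n set). (c1 + c2 * real k ^ m) * S0)" by (rule sum_mono) (rule coord)
    also have "\<dots> = real N * ((c1 + c2 * real k ^ m) * S0)" by (simp add: N_def)
    finally show ?thesis unfolding yk_def .
  qed
  define C where "C = L * (real N * S0 * (\<bar>c1\<bar> + \<bar>c2\<bar>))^2"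
  have C0: "C \<ge> 0" unfolding C_def using L by simp
  have upper: "(1+g)^k * (- Qf H v0) \<le> C * real k ^ (2*m+2)" if k: "k \<ge> 1" for k
  proof -
    have nn: "0 \<le> real N * ((c1 + c2 * real k ^ m) * S0)" using normb[of k] norm_ge_zero order_trans by blast
    have "(norm ((Tl \<alpha> H Bs ^^ k) v0))^2 \<le> (real N * ((c1 + c2 * real k ^ m) * S0))^2"
      using normb[of k] by (intro power_mono) auto
    also have "\<dots> = (real N * S0)^2 * (c1 + c2 * real k ^ m)^2" by (simp add: power_mult_distrib mult_ac)
    also have "\<dots> \<le> (real N * S0)^2 * ((\<bar>c1\<bar> + \<bar>c2\<bar>)^2 * real k ^ (2*m+2))"
      by (intro mult_left_mono poly_sq_bound k) simp
    finally have "L * (norm ((Tl \<alpha> H Bs ^^ k) v0))^2 \<le> L * ((real N * S0)^2 * ((\<bar>c1\<bar> + \<bar>c2\<bar>)^2 * real k ^ (2*m+2)))"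
      using L by (intro mult_left_mono) auto
    also have "\<dots> = C * real k ^ (2*m+2)" unfolding C_def by (simp add: power_mult_distrib mult_ac)
    finally show ?thesis using gr[of k] by linarith
  qed
  define q where "q = - Qf H v0"
  have q: "q > 0" unfolding q_def using Q0 by simp
  have lim: "(\<lambda>k. real k ^ (2*m+2) / (1+g) ^ k) \<longlonglongrightarrow> 0" by (rule exp_poly) (use g in auto)
  have "q / (C + 1) > 0" using q C0 by simp
  from order_tendstoD(2)[OF lim this] obtain K where K: "\<And>k. k \<ge> K \<Longrightarrow> real k ^ (2*m+2) / (1+g) ^ k < q / (C + 1)"
    unfolding eventually_sequentially by blast
  define k where "k = max K 1"
  have k1: "k \<ge> 1" and kK: "k \<ge> K" unfolding k_def by auto
  have pg: "(1+g)^k > 0" using g by simp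
  have "real k ^ (2*m+2) < q / (C + 1) * (1+g)^k" using K[OF kK] pg by (simp add: pos_divide_less_eq)
  hence "(C + 1) * real k ^ (2*m+2) < q * (1+g)^k" using C0 by (simp add: field_simps)
  moreover have "C * real k ^ (2*m+2) \<le> (C + 1) * real k ^ (2*m+2)" by (simp add: algebra_simps)
  moreover have "(1+g)^k * q \<le> C * real k ^ (2*m+2)" using upper[OF k1] unfolding q_def .
  ultimately show False by (simp add: mult.commute)
qed


end
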